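(* The hyperbolic plane $\mathbb H^2$ (with its geodesic segments) is drop complete, whereas its vertical extension $\mathbb H^2\times\mathbb R$ (with the product Riemannian metric and its geodesic segments) is not drop complete.
   Context: $\mathbb H^2$ denotes the hyperbolic plane, the complete simply connected Riemannian surface of constant curvature $-1$. In a space where any two points $a,b$ are joined by a unique geodesic segment $[a,b]$, a set $K$ is convex if $[a,b]\subseteq K$ for all $a,b\in K$; $\operatorname{conv}(H)$ is the intersection of all convex sets containing $H$; and the space is drop complete if for every convex set $K$ and every point $x_0$, $\operatorname{conv}(\{x_0\}\cup K)=\bigcup\{[x_0,x]\mid x\in K\}$. The vertical extension $\mathbb H^2\times\mathbb R$ carries the product metric; its geodesic segment from $(x_0,y_0)$ to $(x_1,y_1)$ is $t\mapsto(c(t),(1-t)y_0+ty_1)$, $t\in[0,1]$, where $c$ is the constant-speed geodesic of $\mathbb H^2$ from $x_0$ to $x_1$. *)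

theory Defs
  imports "HOL-Analysis.Analysis"
begin

text \<open>A space is given by a carrier set S and a segment operator seg, where
  seg a b is the (unique) geodesic segment [a,b].\<close>

definition convex_in :: "('a \<Rightarrow> 'a \<Rightarrow> 'a set) \<Rightarrow> 'a set \<Rightarrow> 'a set \<Rightarrow> bool" where
  "convex_in seg S K \<longleftrightarrow> K \<subseteq> S \<and> (\<forall>a\<in>K. \<forall>b\<in>K. seg a b \<subseteq> K)"

definition conv_in :: "('a \<Rightarrow> 'a \<Rightarrow> 'a set) \<Rightarrow> 'a set \<Rightarrow> 'a set \<Rightarrow> 'a set" where
  "conv_in seg S H = \<Inter>{K. convex_in seg S K \<and> H \<subseteq> K}"

definition drop_complete :: "('a \<Rightarrow> 'a \<Rightarrow> 'a set) \<Rightarrow> 'a set \<Rightarrow> bool" where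
  "drop_complete seg S \<longleftrightarrow>
     (\<forall>K x0. convex_in seg S K \<and> K \<noteq> {} \<and> x0 \<in> S \<longrightarrow>
        conv_in seg S (insert x0 K) = (\<Union>x\<in>K. seg x0 x))"

definition H2 :: "complex set" where
  "H2 = {z. Im z > 0}"

definition hdist :: "complex \<Rightarrow> complex \<Rightarrow> real" where
  "hdist z w = arcosh (1 + (cmod (z - w))\<^sup>2 / (2 * Im z * Im w))"

definition hgeodesic :: "complex \<Rightarrow> complex \<Rightarrow> (real \<Rightarrow> complex) \<Rightarrow> bool" where
  "hgeodesic a b c \<longleftrightarrow> c 0 = a \<and> c 1 = b \<and> (\<forall>t\<in>{0..1}. c t \<in> H2) \<and>
     (\<forall>s\<in>{0..1}. \<forall>t\<in>{0..1}. hdist (c s) (c t) = \<bar>s - t\<bar> * hdist a b)"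

definition hseg :: "complex \<Rightarrow> complex \<Rightarrow> complex set" where
  "hseg a b = {c t | c t. hgeodesic a b c \<and> t \<in> {0..1}}"

definition H2R :: "(complex \<times> real) set" where
  "H2R = H2 \<times> UNIV"

definition pseg :: "complex \<times> real \<Rightarrow> complex \<times> real \<Rightarrow> (complex \<times> real) set" where
  "pseg p q = {(c t, (1 - t) * snd p + t * snd q) | c t.
                 hgeodesic (fst p) (fst q) c \<and> t \<in> {0..1}}"

end

theory Submission
  imports Defs
begin

datatype hv = HV (h0: real) (h1: real) (h2: real)

definition mink :: "hv \<Rightarrow> hv \<Rightarrow> real" where
  "mink a b = h0 a * h0 b - h1 a * h1 b - h2 a * h2 b"

definition lin :: "real \<Rightarrow> hv \<Rightarrow> real \<Rightarrow> hv \<Rightarrow> hv" where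
  "lin \<alpha> a \<beta> b = HV (\<alpha> * h0 a + \<beta> * h0 b) (\<alpha> * h1 a + \<beta> * h1 b) (\<alpha> * h2 a + \<beta> * h2 b)"

definition hyp :: "complex \<Rightarrow> hv" where
  "hyp z = HV ((Re z ^ 2 + Im z ^ 2 + 1) / (2 * Im z)) ((Re z ^ 2 + Im z ^ 2 - 1) / (2 * Im z)) (Re z / Im z)"

definition hinv :: "hv \<Rightarrow> complex" where
  "hinv p = Complex (h2 p / (h0 p - h1 p)) (1 / (h0 p - h1 p))"

definition sheet :: "hv \<Rightarrow> bool" where
  "sheet p \<longleftrightarrow> mink p p = 1 \<and> h0 p > 0"

definition kp :: "hv \<Rightarrow> complex" where
  "kp p = Complex (h1 p / h0 p) (h2 p / h0 p)"

lemma mink_sym: "mink a b = mink b a"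
  by (simp add: mink_def algebra_simps)

lemma mink_lin: "mink (lin \<alpha> a \<beta> b) c = \<alpha> * mink a c + \<beta> * mink b c"
  by (simp add: mink_def lin_def algebra_simps)

lemma mink_lin2: "mink c (lin \<alpha> a \<beta> b) = \<alpha> * mink c a + \<beta> * mink c b"
  by (simp add: mink_def lin_def algebra_simps)

lemma hyp_mink:
  assumes "z \<in> H2" "w \<in> H2"
  shows "mink (hyp z) (hyp w) = 1 + (cmod (z - w))\<^sup>2 / (2 * Im z * Im w)"
proof -
  have y: "Im z > 0" "Im w > 0" using assms by (auto simp: H2_def)
  have c: "(cmod (z - w))\<^sup>2 = (Re z - Re w)^2 + (Im z - Im w)^2"
    by (simp add: cmod_def)
  show ?thesis using y unfolding c mink_def hyp_def
    by (simp add: field_simps) (simp add: algebra_simps power2_eq_square)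
qed

lemma hdist_mink: "z \<in> H2 \<Longrightarrow> w \<in> H2 \<Longrightarrow> hdist z w = arcosh (mink (hyp z) (hyp w))"
  by (simp add: hdist_def hyp_mink)

lemma mink_ge1: "z \<in> H2 \<Longrightarrow> w \<in> H2 \<Longrightarrow> mink (hyp z) (hyp w) \<ge> 1"
  by (simp add: hyp_mink H2_def)

lemma hyp_sheet: "z \<in> H2 \<Longrightarrow> sheet (hyp z)"
proof -
  assume z: "z \<in> H2"
  have "mink (hyp z) (hyp z) = 1" using hyp_mink[OF z z] by simp
  moreover have "h0 (hyp z) > 0" using z by (auto simp: H2_def hyp_def intro!: divide_pos_pos add_nonneg_pos)
  ultimately show ?thesis by (simp add: sheet_def)
qed

lemma sheet_diff: "sheet p \<Longrightarrow> h0 p - h1 p > 0"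
proof -
  assume s: "sheet p"
  hence "h0 p ^ 2 = 1 + h1 p ^2 + h2 p ^ 2" "h0 p > 0" by (auto simp: sheet_def mink_def power2_eq_square)
  hence "h1 p ^ 2 < h0 p ^ 2" by (smt (verit) zero_le_power2)
  hence "\<bar>h1 p\<bar> < \<bar>h0 p\<bar>" using power2_less_imp_less abs_ge_zero by (metis power2_abs)
  thus ?thesis using \<open>h0 p > 0\<close> by linarith
qed

lemma hinv_H2: "sheet p \<Longrightarrow> hinv p \<in> H2"
  using sheet_diff by (simp add: hinv_def H2_def)

lemma hyp_hinv: assumes "sheet p" shows "hyp (hinv p) = p"
proof (cases p)
  case (HV a b c)
  have d: "a - b > 0" using sheet_diff assms HV by fastforce
  have e: "a ^ 2 = 1 + b ^2 + c ^ 2" using assms HV by (auto simp: sheet_def mink_def power2_eq_square)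
  have k: "(c/(a-b))^2 + (1/(a-b))^2 = (a+b)/(a-b)"
  proof -
    have "(c/(a-b))^2 + (1/(a-b))^2 = (c^2+1)/(a-b)^2" by (simp add: power_divide add_divide_distrib)
    also have "c^2 + 1 = (a+b)*(a-b)" using e by (simp add: algebra_simps power2_eq_square)
    also have "(a+b)*(a-b)/(a-b)^2 = (a+b)/(a-b)" using d by (simp add: power2_eq_square)
    finally show ?thesis .
  qed
  have R: "Re (hinv p) = c/(a-b)" and I: "Im (hinv p) = 1/(a-b)" by (simp_all add: hinv_def HV)
  hence S: "Re (hinv p) ^2 + Im (hinv p) ^ 2 = (a+b)/(a-b)" using k by simp
  show ?thesis using d unfolding hyp_def S unfolding R I
    by (simp add: HV field_simps)
qed

lemma hinv_hyp: assumes "z \<in> H2" shows "hinv (hyp z) = z"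
  using assms by (simp add: hyp_def hinv_def H2_def complex_eq_iff field_simps power2_eq_square)

lemma hyp_inj: "z \<in> H2 \<Longrightarrow> w \<in> H2 \<Longrightarrow> hyp z = hyp w \<Longrightarrow> z = w"
  by (metis hinv_hyp)

lemma timelike_zero:
  assumes A: "sheet A" and o: "mink w A = 0" and n: "mink w w = 0"
  shows "w = HV 0 0 0"
proof -
  obtain a0 a1 a2 where Ad: "A = HV a0 a1 a2" by (cases A)
  obtain w0 w1 w2 where wd: "w = HV w0 w1 w2" by (cases w)
  have e1: "a0*a0 - a1*a1 - a2*a2 = 1" "a0 > 0" using A Ad by (auto simp: sheet_def mink_def)
  have e2: "w0*a0 = w1*a1 + w2*a2" using o by (simp add: Ad wd mink_def)
  have e3: "w0*w0 = w1*w1 + w2*w2" using n by (simp add: wd mink_def)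
  have "(w1*a1 + w2*a2)^2 + (w1*a2 - w2*a1)^2 = (w1*w1+w2*w2)*(a1*a1+a2*a2)"
    by (simp add: power2_eq_square algebra_simps)
  hence "(w1*a1 + w2*a2)^2 \<le> (w1*w1+w2*w2)*(a1*a1+a2*a2)"
    by (metis le_add_same_cancel1 zero_le_power2)
  hence "(w0*a0)^2 \<le> (w0*w0)*(a0*a0 - 1)" using e1(1) e2 e3 by (simp add: algebra_simps)
  hence "w0*w0 \<le> 0" by (simp add: power2_eq_square algebra_simps)
  hence w0: "w0 = 0" by (simp add: mult_le_0_iff) linarith
  hence s0: "w1*w1 + w2*w2 = 0" using e3 by simp
  have "w1*w1 \<ge> 0" "w2*w2 \<ge> 0" by simp_all
  hence "w1*w1 = 0" "w2*w2 = 0" using s0 by linarith+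
  hence "w1 = 0" "w2 = 0" by simp_all
  thus ?thesis using w0 wd by simp
qed

lemma hdist_pos: assumes "a \<in> H2" "b \<in> H2" "a \<noteq> b" shows "hdist a b > 0"
proof -
  have "cmod (a - b) > 0" using assms by simp
  moreover have "Im a > 0" "Im b > 0" using assms by (auto simp: H2_def)
  ultimately have "(cmod (a - b))\<^sup>2 / (2 * Im a * Im b) > 0" by simp
  hence "1 + (cmod (a - b))\<^sup>2 / (2 * Im a * Im b) \<ge> 1" "1 + (cmod (a - b))\<^sup>2 / (2 * Im a * Im b) \<noteq> 1" by linarith+
  thus ?thesis unfolding hdist_def using arcosh_real_gt_1_iff by blast
qed

lemma hdist_zero: assumes "a \<in> H2" "b \<in> H2" "hdist a b = 0" shows "a = b"
  using hdist_pos[OF assms(1,2)] assms(3) by fastforce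

lemma cosh_hdist: "a \<in> H2 \<Longrightarrow> b \<in> H2 \<Longrightarrow> cosh (hdist a b) = mink (hyp a) (hyp b)"
  using hdist_mink mink_ge1 cosh_arcosh_real by simp

lemma idt: fixes D x y :: real
  shows "sinh(D-x) * sinh(D-y) + sinh x * sinh y + (sinh(D-x) * sinh y + sinh x * sinh(D-y)) * cosh D = cosh(x-y) * (sinh D)^2"
proof -
  have a: "cosh D ^ 2 = sinh D ^ 2 + 1" "cosh x ^ 2 = sinh x ^ 2 + 1" "cosh y ^ 2 = sinh y ^ 2 + 1" by (simp_all add: cosh_square_eq)
  show ?thesis unfolding sinh_diff cosh_diff using a by algebra
qed

lemma geo_unique:
  assumes a: "a \<in> H2" and b: "b \<in> H2" and ab: "a \<noteq> b" and g: "hgeodesic a b c" and t: "t \<in> {0..1}"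
  shows "hyp (c t) = lin (sinh ((1-t) * hdist a b) / sinh (hdist a b)) (hyp a) (sinh (t * hdist a b) / sinh (hdist a b)) (hyp b)"
proof -
  define D where "D = hdist a b"
  have Dp: "D > 0" using hdist_pos[OF a b ab] D_def by simp
  have p: "c t \<in> H2" using g t by (auto simp: hgeodesic_def)
  have c0: "c 0 = a" and c1: "c 1 = b" using g by (auto simp: hgeodesic_def)
  have gd: "\<forall>s\<in>{0..1}. \<forall>t\<in>{0..1}. hdist (c s) (c t) = \<bar>s - t\<bar> * D"
    using g unfolding hgeodesic_def D_def by blast
  have "hdist (c 0) (c t) = \<bar>0 - t\<bar> * D" using gd t by simp
  hence d1: "hdist a (c t) = t * D" using t c0 by simp
  have "hdist (c t) (c 1) = \<bar>t - 1\<bar> * D" using gd t by simp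
  hence d2: "hdist (c t) b = (1-t) * D" using t c1 by simp
  define A where "A = hyp a"
  define B where "B = hyp b"
  define P where "P = hyp (c t)"
  define u where "u = t * D"
  define v where "v = (1-t) * D"
  have uv: "D = u + v" by (simp add: u_def v_def algebra_simps)
  have mAP: "mink A P = cosh u" using cosh_hdist[OF a p] d1 by (simp add: A_def P_def u_def)
  have mPB: "mink P B = cosh v" using cosh_hdist[OF p b] d2 by (simp add: B_def P_def v_def)
  have mAB: "mink A B = cosh D" using cosh_hdist[OF a b] by (simp add: A_def B_def D_def)
  have sA: "sheet A" "sheet B" "sheet P" using hyp_sheet a b p A_def B_def P_def by auto
  hence mm: "mink A A = 1" "mink B B = 1" "mink P P = 1" by (auto simp: sheet_def)
  define S where "S = sinh D"
  have Sp: "S > 0" using Dp S_def by simp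
  define w where "w = HV (S * h0 P - sinh v * h0 A - sinh u * h0 B) (S * h1 P - sinh v * h1 A - sinh u * h1 B) (S * h2 P - sinh v * h2 A - sinh u * h2 B)"
  have wX: "mink w X = S * mink P X - sinh v * mink A X - sinh u * mink B X" for X
    by (simp add: w_def mink_def algebra_simps)
  have SS: "S = sinh u * cosh v + cosh u * sinh v" "cosh D = cosh u * cosh v + sinh u * sinh v"
    unfolding S_def uv sinh_add cosh_add by simp_all
  have q: "cosh u ^ 2 = sinh u ^ 2 + 1" "cosh v ^ 2 = sinh v ^ 2 + 1" by (simp_all add: cosh_square_eq)
  have wA: "mink w A = 0"
  proof -
    have "mink w A = S * cosh u - sinh v - sinh u * cosh D"
      using wX[of A] mAP mm mAB mink_sym[of P A] mink_sym[of B A] by simp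
    also have "\<dots> = 0" unfolding SS using q by algebra
    finally show ?thesis .
  qed
  have wB: "mink w B = 0"
  proof -
    have "mink w B = S * cosh v - sinh v * cosh D - sinh u"
      using wX[of B] mPB mm mAB by simp
    also have "\<dots> = 0" unfolding SS using q by algebra
    finally show ?thesis .
  qed
  have wP: "mink w P = 0"
  proof -
    have "mink w P = S - sinh v * cosh u - sinh u * cosh v"
      using wX[of P] mAP mm mPB mink_sym[of B P] mink_sym[of A P] by simp
    also have "\<dots> = 0" unfolding SS by algebra
    finally show ?thesis .
  qed
  have "mink w w = S * mink w P - sinh v * mink w A - sinh u * mink w B"
    using wX[of w] mink_sym[of w P] mink_sym[of w A] mink_sym[of w B] by simp
  hence "mink w w = 0" using wA wB wP by simp
  hence "w = HV 0 0 0" using timelike_zero[OF sA(1) wA] by simp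
  hence "h0 P = sinh v / S * h0 A + sinh u / S * h0 B" "h1 P = sinh v / S * h1 A + sinh u / S * h1 B"
     "h2 P = sinh v / S * h2 A + sinh u / S * h2 B"
    using Sp by (auto simp: w_def field_simps)
  hence "P = lin (sinh v / S) A (sinh u / S) B" by (cases P) (simp add: lin_def)
  thus ?thesis by (simp add: P_def A_def B_def S_def D_def u_def v_def)
qed

definition gP :: "complex \<Rightarrow> complex \<Rightarrow> real \<Rightarrow> hv" where
  "gP a b t = lin (sinh ((1-t) * hdist a b) / sinh (hdist a b)) (hyp a) (sinh (t * hdist a b) / sinh (hdist a b)) (hyp b)"

lemma gP_mink:
  assumes a: "a \<in> H2" and b: "b \<in> H2" and ab: "a \<noteq> b"
  shows "mink (gP a b s) (gP a b t) = cosh ((s - t) * hdist a b)"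
proof -
  define D where "D = hdist a b"
  have Dp: "D > 0" using hdist_pos[OF a b ab] D_def by simp
  define S where "S = sinh D"
  have Sp: "S > 0" using Dp S_def by simp
  define A where "A = hyp a"
  define B where "B = hyp b"
  have mAB: "mink A B = cosh D" using cosh_hdist[OF a b] by (simp add: A_def B_def D_def)
  have sA: "sheet A" "sheet B" using hyp_sheet a b A_def B_def by auto
  hence mm: "mink A A = 1" "mink B B = 1" by (auto simp: sheet_def)
  have e: "(1-s)*D = D - s*D" "(1-t)*D = D - t*D" "(s-t)*D = s*D - t*D" by (simp_all add: algebra_simps)
  have "mink (gP a b s) (gP a b t) = (sinh (D - s*D) * sinh (D - t*D) + sinh (s*D) * sinh (t*D)
      + (sinh (D - s*D) * sinh (t*D) + sinh (s*D) * sinh (D - t*D)) * cosh D) / S^2"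
    unfolding gP_def D_def[symmetric] A_def[symmetric] B_def[symmetric] S_def[symmetric] e
      mink_lin mink_lin2 using mm mAB mink_sym[of B A] Sp
    by (simp add: field_simps power2_eq_square)
  also have "\<dots> = cosh ((s - t) * D)" unfolding idt e S_def using Sp S_def by simp
  finally show ?thesis by (simp add: D_def)
qed

lemma gP_sheet:
  assumes a: "a \<in> H2" and b: "b \<in> H2" and ab: "a \<noteq> b" and t: "t \<in> {0..1}"
  shows "sheet (gP a b t)"
proof -
  define D where "D = hdist a b"
  have Dp: "D > 0" using hdist_pos[OF a b ab] D_def by simp
  have p: "h0 (hyp a) > 0" "h0 (hyp b) > 0" using hyp_sheet a b by (auto simp: sheet_def)
  have "sinh ((1-t)*D) \<ge> 0" "sinh (t*D) \<ge> 0" using t Dp by auto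
  moreover have "sinh ((1-t)*D) > 0 \<or> sinh (t*D) > 0" using t Dp
    by (cases "t = 0") (auto intro: mult_pos_pos)
  ultimately have "sinh ((1-t)*D) / sinh D * h0 (hyp a) + sinh (t*D) / sinh D * h0 (hyp b) > 0"
    using p Dp by (auto intro: add_pos_nonneg add_nonneg_pos)
  hence "h0 (gP a b t) > 0" by (simp add: gP_def lin_def D_def)
  moreover have "mink (gP a b t) (gP a b t) = 1" using gP_mink[OF a b ab] by simp
  ultimately show ?thesis by (simp add: sheet_def)
qed

lemma gP_0: assumes a: "a \<in> H2" and b: "b \<in> H2" and ab: "a \<noteq> b" shows "gP a b 0 = hyp a"
  using hdist_pos[OF a b ab] by (simp add: gP_def lin_def)

lemma gP_1: assumes a: "a \<in> H2" and b: "b \<in> H2" and ab: "a \<noteq> b" shows "gP a b 1 = hyp b"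
  using hdist_pos[OF a b ab] by (simp add: gP_def lin_def)

lemma geo_exists:
  assumes a: "a \<in> H2" and b: "b \<in> H2" and ab: "a \<noteq> b"
  shows "hgeodesic a b (\<lambda>t. hinv (gP a b t))"
  unfolding hgeodesic_def
proof (intro conjI ballI)
  show "hinv (gP a b 0) = a" using gP_0[OF assms] hinv_hyp a by simp
  show "hinv (gP a b 1) = b" using gP_1[OF assms] hinv_hyp b by simp
  fix t assume t: "t \<in> {0..1::real}"
  show "hinv (gP a b t) \<in> H2" using hinv_H2 gP_sheet[OF assms t] by simp
  fix s assume s: "s \<in> {0..1::real}"
  have h: "hyp (hinv (gP a b t)) = gP a b t" "hyp (hinv (gP a b s)) = gP a b s"
    using hyp_hinv gP_sheet[OF assms] s t by auto
  have "hdist (hinv (gP a b t)) (hinv (gP a b s)) = arcosh (cosh ((t - s) * hdist a b))"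
    using hdist_mink hinv_H2 gP_sheet[OF assms] s t h gP_mink[OF assms] by simp
  also have "cosh ((t - s) * hdist a b) = cosh (\<bar>t - s\<bar> * hdist a b)"
    using hdist_pos[OF assms] by (metis abs_mult abs_of_pos cosh_real_abs)
  also have "arcosh (cosh (\<bar>t - s\<bar> * hdist a b)) = \<bar>t - s\<bar> * hdist a b"
    using hdist_pos[OF assms] by (intro arcosh_cosh_real) simp
  finally show "hdist (hinv (gP a b t)) (hinv (gP a b s)) = \<bar>t - s\<bar> * hdist a b" .
qed

definition kl :: "complex \<Rightarrow> complex" where "kl z = kp (hyp z)"

lemma kp_lin:
  assumes "h0 A > 0" "h0 B > 0" "\<alpha> \<ge> 0" "\<beta> \<ge> 0" "\<alpha> * h0 A + \<beta> * h0 B > 0"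
  shows "kp (lin \<alpha> A \<beta> B) = (1 - \<beta> * h0 B / (\<alpha> * h0 A + \<beta> * h0 B)) *\<^sub>R kp A
          + (\<beta> * h0 B / (\<alpha> * h0 A + \<beta> * h0 B)) *\<^sub>R kp B"
proof -
  define N where "N = \<alpha> * h0 A + \<beta> * h0 B"
  have N: "N > 0" using assms N_def by simp
  have m: "1 - \<beta> * h0 B / N = \<alpha> * h0 A / N" using N by (simp add: N_def field_simps)
  have r1: "(\<alpha> * h1 A + \<beta> * h1 B) / N = \<alpha> * h0 A / N * (h1 A / h0 A) + \<beta> * h0 B / N * (h1 B / h0 B)"
    using assms(1,2) N by (simp add: field_simps)
  have r2: "(\<alpha> * h2 A + \<beta> * h2 B) / N = \<alpha> * h0 A / N * (h2 A / h0 A) + \<beta> * h0 B / N * (h2 B / h0 B)"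
    using assms(1,2) N by (simp add: field_simps)
  show ?thesis unfolding N_def[symmetric] m
    using r1 r2 by (simp add: kp_def lin_def complex_eq_iff N_def)
qed

lemma kp_inj:
  assumes A: "sheet A" and B: "sheet B" and e: "kp A = kp B" shows "A = B"
proof -
  have p: "h0 A > 0" "h0 B > 0" using A B by (auto simp: sheet_def)
  define r where "r = h0 A / h0 B"
  have r: "r > 0" using p r_def by simp
  have e1: "h1 A / h0 A = h1 B / h0 B" "h2 A / h0 A = h2 B / h0 B" using e by (auto simp: kp_def complex_eq_iff)
  have c: "h0 A = r * h0 B" "h1 A = r * h1 B" "h2 A = r * h2 B"
    using p e1 by (auto simp: r_def field_simps)
  have "mink A A = r^2 * mink B B" by (simp add: mink_def c power2_eq_square algebra_simps)
  hence "r^2 = 1" using A B by (simp add: sheet_def)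
  hence "r = 1" using r by (simp add: power2_eq_1_iff)
  thus ?thesis using c by (cases A, cases B) simp
qed

lemma kl_inj: "z \<in> H2 \<Longrightarrow> w \<in> H2 \<Longrightarrow> kl z = kl w \<Longrightarrow> z = w"
  unfolding kl_def by (metis kp_inj hyp_sheet hyp_inj)

lemma in_hseg: "hgeodesic a b c \<Longrightarrow> t \<in> {0..1} \<Longrightarrow> c t \<in> hseg a b"
  unfolding hseg_def by blast

lemma hseg_H2: "x \<in> hseg a b \<Longrightarrow> x \<in> H2"
  by (auto simp: hseg_def hgeodesic_def)

lemma hdist_refl: "hdist a a = 0" by (simp add: hdist_def)

lemma hseg_kl:
  assumes a: "a \<in> H2" and b: "b \<in> H2" and x: "x \<in> hseg a b"
  shows "kl x \<in> closed_segment (kl a) (kl b)"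
proof -
  obtain c t where g: "hgeodesic a b c" and t: "t \<in> {0..1}" and xc: "x = c t"
    using x by (auto simp: hseg_def)
  show ?thesis
  proof (cases "a = b")
    case True
    have gd: "\<forall>s\<in>{0..1}. \<forall>t\<in>{0..1}. hdist (c s) (c t) = \<bar>s - t\<bar> * hdist a b"
      and c0: "c 0 = a" using g unfolding hgeodesic_def by blast+
    have "hdist (c 0) (c t) = \<bar>0 - t\<bar> * hdist a b" using gd t by simp
    hence "hdist a x = 0" using True c0 xc by (simp add: hdist_refl)
    hence "x = a" using hdist_zero a hseg_H2[OF x] by metis
    thus ?thesis by simp
  next
    case False
    define D where "D = hdist a b"
    have Dp: "D > 0" using hdist_pos[OF a b False] D_def by simp
    have h: "hyp x = gP a b t" using geo_unique[OF a b False g t] xc by (simp add: gP_def)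
    have p: "h0 (hyp a) > 0" "h0 (hyp b) > 0" using hyp_sheet a b by (auto simp: sheet_def)
    define \<alpha> where "\<alpha> = sinh ((1-t)*D) / sinh D"
    define \<beta> where "\<beta> = sinh (t*D) / sinh D"
    have ab: "\<alpha> \<ge> 0" "\<beta> \<ge> 0" using t Dp by (auto simp: \<alpha>_def \<beta>_def)
    have "sinh ((1-t)*D) > 0 \<or> sinh (t*D) > 0" using t Dp
      by (cases "t = 0") (auto intro: mult_pos_pos)
    hence "\<alpha> > 0 \<or> \<beta> > 0" using Dp by (auto simp: \<alpha>_def \<beta>_def)
    hence N: "\<alpha> * h0 (hyp a) + \<beta> * h0 (hyp b) > 0"
      using p ab by (auto intro: add_pos_nonneg add_nonneg_pos)
    define \<mu> where "\<mu> = \<beta> * h0 (hyp b) / (\<alpha> * h0 (hyp a) + \<beta> * h0 (hyp b))"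
    have mu: "0 \<le> \<mu>" "\<mu> \<le> 1" using N ab p by (auto simp: \<mu>_def field_simps)
    have "kl x = (1 - \<mu>) *\<^sub>R kl a + \<mu> *\<^sub>R kl b"
      unfolding kl_def h \<mu>_def using kp_lin[OF p ab N]
      by (simp add: gP_def \<alpha>_def \<beta>_def D_def)
    thus ?thesis using mu unfolding closed_segment_def by blast
  qed
qed

lemma kl_hseg:
  assumes a: "a \<in> H2" and b: "b \<in> H2" and v: "v \<in> closed_segment (kl a) (kl b)"
  shows "\<exists>x\<in>hseg a b. kl x = v"
proof (cases "a = b")
  case True
  have "hgeodesic a b (\<lambda>_. a)" using True a by (simp add: hgeodesic_def hdist_refl)
  hence "a \<in> hseg a b" using in_hseg[of a b "\<lambda>_. a" 0] by simp
  moreover have "v = kl a" using v True by simp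
  ultimately show ?thesis by blast
next
  case False
  define D where "D = hdist a b"
  have Dp: "D > 0" using hdist_pos[OF a b False] D_def by simp
  have p: "h0 (hyp a) > 0" "h0 (hyp b) > 0" using hyp_sheet a b by (auto simp: sheet_def)
  define \<alpha> where "\<alpha> t = sinh ((1-t)*D) / sinh D" for t
  define \<beta> where "\<beta> t = sinh (t*D) / sinh D" for t
  have ab: "\<alpha> t \<ge> 0" "\<beta> t \<ge> 0" if "t \<in> {0..1}" for t using that Dp by (auto simp: \<alpha>_def \<beta>_def)
  have N: "\<alpha> t * h0 (hyp a) + \<beta> t * h0 (hyp b) > 0" if t: "t \<in> {0..1}" for t
  proof -
    have "sinh ((1-t)*D) > 0 \<or> sinh (t*D) > 0" using t Dp
      by (cases "t = 0") (auto intro: mult_pos_pos)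
    hence "\<alpha> t > 0 \<or> \<beta> t > 0" using Dp by (auto simp: \<alpha>_def \<beta>_def)
    thus ?thesis using p ab[OF t] by (auto intro: add_pos_nonneg add_nonneg_pos)
  qed
  define f where "f t = \<beta> t * h0 (hyp b) / (\<alpha> t * h0 (hyp a) + \<beta> t * h0 (hyp b))" for t
  obtain \<mu> where mu: "0 \<le> \<mu>" "\<mu> \<le> 1" and vm: "v = (1 - \<mu>) *\<^sub>R kl a + \<mu> *\<^sub>R kl b"
    using v unfolding closed_segment_def by blast
  have f0: "f 0 = 0" by (simp add: f_def \<beta>_def)
  have f1: "f 1 = 1" using p Dp by (simp add: f_def \<alpha>_def \<beta>_def)
  have nz: "\<forall>t\<in>{0..1}. \<alpha> t * h0 (hyp a) + \<beta> t * h0 (hyp b) \<noteq> 0"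
    using N by (metis less_irrefl)
  have cont: "continuous_on {0..1} f"
    unfolding f_def
    apply (rule continuous_on_divide)
    unfolding \<alpha>_def \<beta>_def
      apply (intro continuous_intros)
    using Dp apply simp
     apply (intro continuous_intros)
    using Dp apply simp
    using Dp apply simp
    using nz unfolding \<alpha>_def \<beta>_def by blast
  obtain t where t: "t \<ge> 0" "t \<le> 1" "f t = \<mu>"
    using IVT'[of f 0 \<mu> 1] f0 f1 mu cont by auto
  hence t': "t \<in> {0..1}" by simp
  have "hgeodesic a b (\<lambda>t. hinv (gP a b t))" using geo_exists[OF a b False] .
  hence x: "hinv (gP a b t) \<in> hseg a b" using t' in_hseg[of a b "\<lambda>t. hinv (gP a b t)" t] by simp
  have "kl (hinv (gP a b t)) = kp (gP a b t)"
    unfolding kl_def using hyp_hinv gP_sheet[OF a b False t'] by simp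
  also have "\<dots> = (1 - f t) *\<^sub>R kl a + f t *\<^sub>R kl b"
    unfolding kl_def f_def using kp_lin[OF p ab[OF t'] N[OF t']]
    by (simp add: gP_def \<alpha>_def \<beta>_def D_def)
  finally show ?thesis using x t vm by auto
qed

lemma ends_hseg: assumes a: "a \<in> H2" and b: "b \<in> H2" shows "a \<in> hseg a b" "b \<in> hseg a b"
proof -
  obtain x where "x \<in> hseg a b" "kl x = kl a" using kl_hseg[OF a b, of "kl a"] by auto
  thus "a \<in> hseg a b" using kl_inj hseg_H2 a by metis
  obtain y where "y \<in> hseg a b" "kl y = kl b" using kl_hseg[OF a b, of "kl b"] by auto
  thus "b \<in> hseg a b" using kl_inj hseg_H2 b by metis
qed

lemma drop_H2: "drop_complete hseg H2"
  unfolding drop_complete_def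
proof (intro allI impI)
  fix K x0 assume asm: "convex_in hseg H2 K \<and> K \<noteq> {} \<and> x0 \<in> H2"
  hence KH: "K \<subseteq> H2" and Kc: "\<And>a b. a \<in> K \<Longrightarrow> b \<in> K \<Longrightarrow> hseg a b \<subseteq> K"
    and Kne: "K \<noteq> {}" and x0: "x0 \<in> H2" by (auto simp: convex_in_def)
  define U where "U = (\<Union>x\<in>K. hseg x0 x)"
  have sub1: "U \<subseteq> conv_in hseg H2 (insert x0 K)"
    unfolding U_def conv_in_def convex_in_def by blast
  have ins: "insert x0 K \<subseteq> U"
  proof
    fix y assume "y \<in> insert x0 K"
    then show "y \<in> U"
    proof
      assume "y = x0"
      obtain k where "k \<in> K" using Kne by auto
      thus "y \<in> U" using ends_hseg[OF x0, of k] KH \<open>y = x0\<close> unfolding U_def by blast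
    next
      assume "y \<in> K"
      thus "y \<in> U" using ends_hseg[OF x0, of y] KH unfolding U_def by blast
    qed
  qed
  define K' where "K' = kl ` K"
  have cK': "convex K'"
    unfolding convex_contains_segment
  proof (intro ballI subsetI)
    fix y1 y2 v assume "y1 \<in> K'" "y2 \<in> K'" "v \<in> closed_segment y1 y2"
    then obtain k1 k2 where k: "k1 \<in> K" "k2 \<in> K" "y1 = kl k1" "y2 = kl k2" by (auto simp: K'_def)
    obtain x where "x \<in> hseg k1 k2" "kl x = v" using kl_hseg[of k1 k2 v] k KH \<open>v \<in> closed_segment y1 y2\<close> by auto
    thus "v \<in> K'" using Kc[OF k(1,2)] K'_def by auto
  qed
  define Hh where "Hh = convex hull (insert (kl x0) K')"
  have Hh: "Hh = (\<Union>y\<in>K'. closed_segment (kl x0) y)"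
    using convex_hull_insert_segments[of "kl x0" K'] Kne cK' by (simp add: Hh_def K'_def hull_same)
  have klU: "kl a \<in> Hh" if "a \<in> U" for a
  proof -
    obtain xa where xa: "xa \<in> K" "a \<in> hseg x0 xa" using \<open>a \<in> U\<close> U_def by auto
    hence "kl a \<in> closed_segment (kl x0) (kl xa)" using hseg_kl x0 KH by auto
    thus ?thesis using xa Hh K'_def by auto
  qed
  have cU: "convex_in hseg H2 U"
    unfolding convex_in_def
  proof (intro conjI ballI subsetI)
    show "y \<in> H2" if "y \<in> U" for y using that hseg_H2 U_def by auto
    fix a b p assume a: "a \<in> U" and b: "b \<in> U" and p: "p \<in> hseg a b"
    have aH: "a \<in> H2" "b \<in> H2" using a b hseg_H2 U_def by auto
    have "kl p \<in> closed_segment (kl a) (kl b)" using hseg_kl[OF aH p] .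
    moreover have "closed_segment (kl a) (kl b) \<subseteq> Hh"
      using klU[OF a] klU[OF b] convex_convex_hull Hh_def by (metis convex_contains_segment)
    ultimately have "kl p \<in> Hh" by blast
    then obtain x where x: "x \<in> K" "kl p \<in> closed_segment (kl x0) (kl x)" using Hh K'_def by auto
    then obtain p' where p': "p' \<in> hseg x0 x" "kl p' = kl p" using kl_hseg[OF x0, of x] KH by auto
    have "p' = p" using kl_inj[OF hseg_H2[OF p'(1)] hseg_H2[OF p] p'(2)] .
    thus "p \<in> U" using p' x U_def by auto
  qed
  have "conv_in hseg H2 (insert x0 K) \<subseteq> U"
    unfolding conv_in_def using cU ins by blast
  thus "conv_in hseg H2 (insert x0 K) = (\<Union>x\<in>K. hseg x0 x)" using sub1 U_def by auto
qed

lemma hseg_convex: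
  assumes p: "p \<in> H2" and q: "q \<in> H2" and a: "a \<in> hseg p q" and b: "b \<in> hseg p q"
  shows "hseg a b \<subseteq> hseg p q"
proof
  fix y assume y: "y \<in> hseg a b"
  have aH: "a \<in> H2" "b \<in> H2" using a b hseg_H2 by auto
  have "kl y \<in> closed_segment (kl a) (kl b)" using hseg_kl[OF aH y] .
  moreover have "closed_segment (kl a) (kl b) \<subseteq> closed_segment (kl p) (kl q)"
    using hseg_kl[OF p q a] hseg_kl[OF p q b] by (intro closed_segment_subset) auto
  ultimately obtain y' where "y' \<in> hseg p q" "kl y' = kl y" using kl_hseg[OF p q] by blast
  thus "y \<in> hseg p q" using kl_inj hseg_H2 y by metis
qed

lemma in_pseg: "hgeodesic (fst x) (fst y) c \<Longrightarrow> t \<in> {0..1} \<Longrightarrow> (c t, (1 - t) * snd x + t * snd y) \<in> pseg x y"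
  unfolding pseg_def by blast

definition pP :: complex where "pP = Complex (9/13) (20/13)"
definition qQ :: complex where "qQ = Complex (-9/13) (20/13)"

lemma pts: "pP \<in> H2" "qQ \<in> H2" "\<i> \<in> H2" "pP \<noteq> \<i>" "qQ \<noteq> \<i>"
  by (auto simp: pP_def qQ_def H2_def complex_eq_iff)

lemma hyp_pts: "hyp \<i> = HV 1 0 0" "hyp pP = HV (5/4) (3/5) (9/20)" "hyp qQ = HV (5/4) (3/5) (-9/20)"
  by (simp_all add: hyp_def pP_def qQ_def power2_eq_square)

lemma kl_pts: "kl pP = Complex (12/25) (9/25)" "kl qQ = Complex (12/25) (-9/25)" "kl \<i> = 0"
  by (simp_all add: kl_def kp_def hyp_pts complex_eq_iff)

lemma hdist_pq: "hdist \<i> pP = hdist \<i> qQ"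
  by (simp add: hdist_def pP_def qQ_def cmod_def)

lemma gP_half: "gP a b (1/2) = lin (sinh (hdist a b / 2) / sinh (hdist a b)) (hyp a) (sinh (hdist a b / 2) / sinh (hdist a b)) (hyp b)"
  by (simp add: gP_def)

lemma not_drop_H2R: "\<not> drop_complete pseg H2R"
proof
  assume dc: "drop_complete pseg H2R"
  define K where "K = hseg pP qQ \<times> {0::real}"
  define x0 where "x0 = (\<i>, 1::real)"
  have KH: "K \<subseteq> H2R" using hseg_H2 by (auto simp: K_def H2R_def)
  have Kc: "convex_in pseg H2R K"
    unfolding convex_in_def
  proof (intro conjI ballI subsetI)
    show "x \<in> H2R" if "x \<in> K" for x using that KH by auto
    fix x y z assume x: "x \<in> K" and y: "y \<in> K" and z: "z \<in> pseg x y"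
    obtain c t where g: "hgeodesic (fst x) (fst y) c" and t: "t \<in> {0..1}" and
      zd: "z = (c t, (1 - t) * snd x + t * snd y)" using z unfolding pseg_def by blast
    have "c t \<in> hseg (fst x) (fst y)" using in_hseg[OF g t] .
    moreover have "fst x \<in> hseg pP qQ" "fst y \<in> hseg pP qQ" using x y by (auto simp: K_def)
    ultimately have "c t \<in> hseg pP qQ" using hseg_convex[OF pts(1,2)] by blast
    thus "z \<in> K" using zd x y by (auto simp: K_def)
  qed
  have Kne: "K \<noteq> {}" using ends_hseg[OF pts(1,2)] K_def by auto
  have x0H: "x0 \<in> H2R" using pts by (simp add: x0_def H2R_def)
  have eq: "conv_in pseg H2R (insert x0 K) = (\<Union>x\<in>K. pseg x0 x)"
    using dc Kc Kne x0H unfolding drop_complete_def by blast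
  define D where "D = hdist \<i> pP"
  have Dp: "D > 0" using hdist_pos[OF pts(3,1)] pts(4) D_def by auto
  define \<kappa> where "\<kappa> = sinh (D / 2) / sinh D"
  have kp0: "\<kappa> > 0" using Dp by (simp add: \<kappa>_def)
  define mp where "mp = hinv (gP \<i> pP (1/2))"
  define mq where "mq = hinv (gP \<i> qQ (1/2))"
  have g1: "hgeodesic \<i> pP (\<lambda>t. hinv (gP \<i> pP t))" using geo_exists pts by metis
  have g2: "hgeodesic \<i> qQ (\<lambda>t. hinv (gP \<i> qQ t))" using geo_exists pts by metis
  have h12: "(1::real)/2 \<in> {0..1}" by simp
  have mpH: "mp \<in> H2" "mq \<in> H2" using hinv_H2 gP_sheet pts h12 mp_def mq_def by metis+
  have hmp: "hyp mp = HV (\<kappa> * (9/4)) (\<kappa> * (3/5)) (\<kappa> * (9/20))"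
    using hyp_hinv gP_sheet[OF pts(3,1) pts(4)[symmetric] h12] unfolding mp_def gP_half
    by (simp add: hyp_pts lin_def \<kappa>_def D_def algebra_simps)
  have hmq: "hyp mq = HV (\<kappa> * (9/4)) (\<kappa> * (3/5)) (- \<kappa> * (9/20))"
    using hyp_hinv gP_sheet[OF pts(3,2) pts(5)[symmetric] h12] unfolding mq_def gP_half
    by (simp add: hyp_pts lin_def \<kappa>_def D_def hdist_pq algebra_simps)
  have mpq: "mp \<noteq> mq" using hmp hmq kp0 by auto
  define m where "m = hinv (gP mp mq (1/2))"
  have g3: "hgeodesic mp mq (\<lambda>t. hinv (gP mp mq t))" using geo_exists mpH mpq by metis
  define lam where "lam = sinh (hdist mp mq / 2) / sinh (hdist mp mq)"
  have l0: "lam > 0" using hdist_pos[OF mpH mpq] by (simp add: lam_def)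
  have hm: "hyp m = HV (lam * \<kappa> * (9/2)) (lam * \<kappa> * (6/5)) 0"
    using hyp_hinv gP_sheet[OF mpH mpq h12] unfolding m_def gP_half
    by (simp add: hmp hmq lin_def lam_def[symmetric] algebra_simps)
  have inconv: "(m, 1/2) \<in> conv_in pseg H2R (insert x0 K)"
    unfolding conv_in_def
  proof (intro InterI, clarify)
    fix C assume cC: "convex_in pseg H2R C" and sC: "insert x0 K \<subseteq> C"
    have Cs: "pseg u w \<subseteq> C" if "u \<in> C" "w \<in> C" for u w using cC that by (auto simp: convex_in_def)
    have pK: "(pP, 0) \<in> K" "(qQ, 0) \<in> K" using ends_hseg[OF pts(1,2)] K_def by auto
    have "(mp, (1 - 1/2) * snd x0 + 1/2 * snd (pP, 0::real)) \<in> pseg x0 (pP, 0)"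
      unfolding mp_def using in_pseg[of x0 "(pP,0)" "\<lambda>t. hinv (gP \<i> pP t)" "1/2"] g1 h12 by (simp add: x0_def)
    hence "(mp, 1/2) \<in> pseg x0 (pP, 0)" by (simp add: x0_def)
    moreover have "x0 \<in> C" "(pP, 0) \<in> C" "(qQ, 0) \<in> C" using sC pK by auto
    ultimately have m1: "(mp, 1/2) \<in> C" using Cs by blast
    have "(mq, (1 - 1/2) * snd x0 + 1/2 * snd (qQ, 0::real)) \<in> pseg x0 (qQ, 0)"
      unfolding mq_def using in_pseg[of x0 "(qQ,0)" "\<lambda>t. hinv (gP \<i> qQ t)" "1/2"] g2 h12 by (simp add: x0_def)
    hence "(mq, 1/2) \<in> pseg x0 (qQ, 0)" by (simp add: x0_def)
    hence m2: "(mq, 1/2) \<in> C" using Cs \<open>x0 \<in> C\<close> \<open>(qQ, 0) \<in> C\<close> by blast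
    have "(m, (1 - 1/2) * (1/2) + 1/2 * (1/2::real)) \<in> pseg (mp, 1/2) (mq, 1/2)"
      unfolding m_def using in_pseg[of "(mp, 1/2)" "(mq, 1/2)" "\<lambda>t. hinv (gP mp mq t)" "1/2"] g3 h12 by simp
    hence "(m, 1/2) \<in> pseg (mp, 1/2) (mq, 1/2)" by simp
    thus "(m, 1/2) \<in> C" using Cs[OF m1 m2] by blast
  qed
  have notin: "(m, 1/2) \<notin> (\<Union>x\<in>K. pseg x0 x)"
  proof
    assume "(m, 1/2) \<in> (\<Union>x\<in>K. pseg x0 x)"
    then obtain a where a: "a \<in> hseg pP qQ" and "(m, 1/2) \<in> pseg x0 (a, 0)" by (auto simp: K_def)
    then obtain c t where g: "hgeodesic \<i> a c" and t: "t \<in> {0..1}" and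
      e: "m = c t" "1/2 = (1 - t) * 1 + t * 0" unfolding pseg_def x0_def by auto
    have t2: "t = 1/2" using e by simp
    have aH: "a \<in> H2" using hseg_H2 a by auto
    have kla: "kl a \<in> closed_segment (kl pP) (kl qQ)" using hseg_kl[OF pts(1,2) a] .
    then obtain \<mu> where "kl a = (1 - \<mu>) *\<^sub>R kl pP + \<mu> *\<^sub>R kl qQ" unfolding closed_segment_def by blast
    hence "Re (kl a) = Re ((1 - \<mu>) *\<^sub>R kl pP + \<mu> *\<^sub>R kl qQ)" by (rule arg_cong)
    also have "\<dots> = 12/25" by (simp add: kl_pts algebra_simps)
    finally have Rea: "Re (kl a) = 12/25" .
    hence ai: "a \<noteq> \<i>" using kl_pts by auto
    have "hyp m = gP \<i> a t" using geo_unique[OF pts(3) aH ai[symmetric] g t] e(1) by (simp add: gP_def)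
    hence "hyp m = gP \<i> a (1/2)" using t2 by simp
    define \<nu> where "\<nu> = sinh (hdist \<i> a / 2) / sinh (hdist \<i> a)"
    have n0: "\<nu> > 0" using hdist_pos[OF pts(3) aH ai[symmetric]] by (simp add: \<nu>_def)
    define A where "A = hyp a"
    have hA: "sheet A" using hyp_sheet aH A_def by simp
    have "hyp m = HV (\<nu> * (1 + h0 A)) (\<nu> * h1 A) (\<nu> * h2 A)"
      using \<open>hyp m = gP \<i> a (1/2)\<close> unfolding gP_half
      by (simp add: hyp_pts lin_def \<nu>_def[symmetric] A_def algebra_simps)
    hence c1: "lam * \<kappa> * (9/2) = \<nu> * (1 + h0 A)" "lam * \<kappa> * (6/5) = \<nu> * h1 A" "0 = \<nu> * h2 A"
      using hm by auto
    have A0: "h0 A > 0" using hA by (simp add: sheet_def)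
    have h2A: "h2 A = 0" using c1(3) n0 by simp
    have "h1 A / h0 A = 12/25" using Rea by (simp add: kl_def kp_def A_def)
    hence h1A: "h1 A = 12/25 * h0 A" using A0 by (simp add: field_simps)
    have lk: "lam * \<kappa> > 0" using l0 kp0 by simp
    have "(6/5) * (\<nu> * (1 + h0 A)) = (9/2) * (\<nu> * h1 A)"
    proof -
      have "(6/5) * (\<nu> * (1 + h0 A)) = (6/5) * (9/2) * (lam * \<kappa>)" using c1(1) by (simp add: algebra_simps)
      moreover have "(9/2) * (\<nu> * h1 A) = (6/5) * (9/2) * (lam * \<kappa>)" using c1(2) by (simp add: algebra_simps)
      ultimately show ?thesis by linarith
    qed
    hence "(6/5) * (1 + h0 A) = (9/2) * h1 A" using n0 by simp
    hence h0A: "h0 A = 5/4" using h1A by simp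
    have "h0 A * h0 A - h1 A * h1 A - h2 A * h2 A = 1" using hA by (simp add: sheet_def mink_def)
    thus False using h0A h1A h2A by simp
  qed
  show False using inconv notin eq by simp
qed

theorem theorem3:
  shows "drop_complete hseg H2 \<and> \<not> drop_complete pseg H2R"
  using drop_H2 not_drop_H2R by blast

end
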